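(* For every finite graph $G$, $\widetilde{\Delta}(G) \leq \alpha^{\ast}(G)^{\widetilde{\omega}(G)}$.
   Context: Two vertices of $G$ are equivalent if they lie in exactly the same maximal cliques of $G$. The clique-quotient graph $\widetilde{G}$ has the equivalence classes as vertices, two distinct classes adjacent iff their representatives are adjacent in $G$; $\widetilde{\Delta}(G)$ is the maximum degree of $\widetilde{G}$. $\widetilde{\omega}(G)$ is the maximum over maximal cliques $K$ of the number of equivalence classes meeting $K$. $\alpha^{\ast}(G)=\max_v\alpha(G[N[v]])$. *)

theory Defs
  imports Main
begin

definition fin_graph :: "'a set \<Rightarrow> ('a \<Rightarrow> 'a \<Rightarrow> bool) \<Rightarrow> bool" where
  "fin_graph V E \<longleftrightarrow> finite V \<and> (\<forall>u v. E u v \<longrightarrow> u \<in> V \<and> v \<in> V) \<and>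
     (\<forall>u v. E u v \<longrightarrow> E v u) \<and> (\<forall>v. \<not> E v v)"

definition is_clique :: "'a set \<Rightarrow> ('a \<Rightarrow> 'a \<Rightarrow> bool) \<Rightarrow> 'a set \<Rightarrow> bool" where
  "is_clique V E K \<longleftrightarrow> K \<subseteq> V \<and> (\<forall>x\<in>K. \<forall>y\<in>K. x \<noteq> y \<longrightarrow> E x y)"

definition max_clique :: "'a set \<Rightarrow> ('a \<Rightarrow> 'a \<Rightarrow> bool) \<Rightarrow> 'a set \<Rightarrow> bool" where
  "max_clique V E K \<longleftrightarrow> is_clique V E K \<and> (\<forall>K'. is_clique V E K' \<and> K \<subseteq> K' \<longrightarrow> K' = K)"

definition clique_equiv :: "'a set \<Rightarrow> ('a \<Rightarrow> 'a \<Rightarrow> bool) \<Rightarrow> ('a \<times> 'a) set" where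
  "clique_equiv V E = {(u, v). u \<in> V \<and> v \<in> V \<and>
     {K. max_clique V E K \<and> u \<in> K} = {K. max_clique V E K \<and> v \<in> K}}"

text \<open>Vertices of the clique-quotient graph: the equivalence classes.\<close>
definition clique_classes :: "'a set \<Rightarrow> ('a \<Rightarrow> 'a \<Rightarrow> bool) \<Rightarrow> 'a set set" where
  "clique_classes V E = V // clique_equiv V E"

definition quot_adj :: "('a \<Rightarrow> 'a \<Rightarrow> bool) \<Rightarrow> 'a set \<Rightarrow> 'a set \<Rightarrow> bool" where
  "quot_adj E C D \<longleftrightarrow> C \<noteq> D \<and> (\<exists>u\<in>C. \<exists>v\<in>D. E u v)"

definition quot_max_degree :: "'a set \<Rightarrow> ('a \<Rightarrow> 'a \<Rightarrow> bool) \<Rightarrow> nat" where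
  "quot_max_degree V E = Max (insert 0
     ((\<lambda>C. card {D \<in> clique_classes V E. quot_adj E C D}) ` clique_classes V E))"

definition quot_omega :: "'a set \<Rightarrow> ('a \<Rightarrow> 'a \<Rightarrow> bool) \<Rightarrow> nat" where
  "quot_omega V E = Max (insert 0
     ((\<lambda>K. card {C \<in> clique_classes V E. C \<inter> K \<noteq> {}}) ` {K. max_clique V E K}))"

definition closed_nbhd :: "'a set \<Rightarrow> ('a \<Rightarrow> 'a \<Rightarrow> bool) \<Rightarrow> 'a \<Rightarrow> 'a set" where
  "closed_nbhd V E v = insert v {u \<in> V. E v u}"

definition indep_set :: "('a \<Rightarrow> 'a \<Rightarrow> bool) \<Rightarrow> 'a set \<Rightarrow> bool" where
  "indep_set E S \<longleftrightarrow> (\<forall>x\<in>S. \<forall>y\<in>S. \<not> E x y)"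

definition alpha_on :: "('a \<Rightarrow> 'a \<Rightarrow> bool) \<Rightarrow> 'a set \<Rightarrow> nat" where
  "alpha_on E W = Max {card S | S. S \<subseteq> W \<and> indep_set E S}"

definition alpha_star :: "'a set \<Rightarrow> ('a \<Rightarrow> 'a \<Rightarrow> bool) \<Rightarrow> nat" where
  "alpha_star V E = Max (insert 0 ((\<lambda>v. alpha_on E (closed_nbhd V E v)) ` V))"

end

theory Submission
  imports Defs
begin

primrec gb :: "nat \<Rightarrow> nat \<Rightarrow> nat" where
  "gb a 0 = 0" | "gb a (Suc n) = a + a * gb a n"

lemma gb_bound: "2 \<le> a \<Longrightarrow> gb a n + a \<le> a ^ Suc n"
proof (induction n)
  case 0 thus ?case by simp
next
  case (Suc n)
  have "gb a (Suc n) + a = 2 * a + a * gb a n" by simp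
  also have "\<dots> \<le> a * a + a * gb a n" using Suc.prems by simp
  also have "\<dots> = a * (gb a n + a)" by (simp add: algebra_simps)
  also have "\<dots> \<le> a * a ^ Suc n" using Suc by simp
  finally show ?case by simp
qed

lemma abstract_bound:
  fixes A :: "'b \<Rightarrow> 'b \<Rightarrow> bool"
  assumes fin: "finite U" and irr: "\<And>x. \<not> A x x" and sym: "\<And>x y. A x y \<Longrightarrow> A y x"
    and H1: "\<And>Q. Q \<subseteq> U \<Longrightarrow> (\<And>x y. x\<in>Q \<Longrightarrow> y\<in>Q \<Longrightarrow> x\<noteq>y \<Longrightarrow> A x y) \<Longrightarrow> card Q \<le> k"
    and H2: "\<And>c S. c \<in> U \<Longrightarrow> S \<subseteq> U \<Longrightarrow> (\<And>s. s\<in>S \<Longrightarrow> A c s)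
               \<Longrightarrow> (\<And>x y. x\<in>S \<Longrightarrow> y\<in>S \<Longrightarrow> \<not> A x y) \<Longrightarrow> card S \<le> a"
  shows "k - card Q = n \<Longrightarrow> Q \<subseteq> U \<Longrightarrow> Q \<noteq> {}
    \<Longrightarrow> (\<And>x y. x\<in>Q \<Longrightarrow> y\<in>Q \<Longrightarrow> x\<noteq>y \<Longrightarrow> A x y)
    \<Longrightarrow> card {D\<in>U. \<forall>q\<in>Q. A q D} \<le> gb a n"
proof (induction n arbitrary: Q)
  case 0
  have fQ: "finite Q" using 0(2) fin finite_subset by blast
  have "{D\<in>U. \<forall>q\<in>Q. A q D} = {}"
  proof (rule ccontr)
    assume "{D\<in>U. \<forall>q\<in>Q. A q D} \<noteq> {}"
    then obtain x where x: "x \<in> U" "\<forall>q\<in>Q. A q x" by blast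
    have xQ: "x \<notin> Q" using x irr by blast
    have "card (insert x Q) \<le> k"
    proof (rule H1)
      show "insert x Q \<subseteq> U" using x 0 by auto
    next
      fix y z assume "y \<in> insert x Q" "z \<in> insert x Q" "y \<noteq> z"
      then show "A y z" using x 0(4) sym by auto
    qed
    moreover have "card (insert x Q) = Suc (card Q)" using fQ xQ by simp
    ultimately show False using 0(1) by simp
  qed
  thus ?case by (metis card.empty gb.simps(1) order_refl)
next
  case (Suc n)
  define X where "X = {D\<in>U. \<forall>q\<in>Q. A q D}"
  have fQ: "finite Q" using Suc(3) fin finite_subset by blast
  have fX: "finite X" using fin X_def by auto
  define P where "P = {S. S \<subseteq> X \<and> (\<forall>x\<in>S. \<forall>y\<in>S. \<not> A x y)}"
  have fP: "finite P" unfolding P_def using fX by (simp add: finite_subset)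
  have "{} \<in> P" unfolding P_def by simp
  then obtain S where S: "S \<in> P" and Smax: "\<forall>T\<in>P. S \<subseteq> T \<longrightarrow> S = T"
    using finite_has_maximal[OF fP] by blast
  have SX: "S \<subseteq> X" and Sind: "\<forall>x\<in>S. \<forall>y\<in>S. \<not> A x y" using S unfolding P_def by auto
  have fS: "finite S" using SX fX finite_subset by blast
  have dom: "\<exists>s\<in>S. A s x" if "x \<in> X" "x \<notin> S" for x
  proof (rule ccontr)
    assume "\<not> (\<exists>s\<in>S. A s x)"
    then have "insert x S \<in> P" unfolding P_def using that SX Sind irr sym by auto
    then show False using Smax that by blast
  qed
  obtain c where c: "c \<in> Q" using Suc(4) by blast
  have cardS: "card S \<le> a"
    apply (rule H2[of c])
    using c Suc(3) SX Sind unfolding X_def by auto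
  define Xs where "Xs s = {D\<in>U. \<forall>q\<in>insert s Q. A q D}" for s
  have sub: "X \<subseteq> S \<union> (\<Union>s\<in>S. Xs s)"
  proof
    fix x assume x: "x \<in> X"
    show "x \<in> S \<union> (\<Union>s\<in>S. Xs s)"
    proof (cases "x \<in> S")
      case False
      then obtain s where "s \<in> S" "A s x" using dom x by blast
      then show ?thesis using x unfolding Xs_def X_def by auto
    qed simp
  qed
  have IH: "card (Xs s) \<le> gb a n" if s: "s \<in> S" for s
  proof -
    have sX: "s \<in> X" using s SX by blast
    have sQ: "s \<notin> Q" using sX irr unfolding X_def by blast
    have cs: "card (insert s Q) = Suc (card Q)" using fQ sQ by simp
    show ?thesis unfolding Xs_def
    proof (rule Suc.IH)
      show "k - card (insert s Q) = n" using cs Suc(2) by simp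
      show "insert s Q \<subseteq> U" using sX Suc(3) unfolding X_def by auto
      show "insert s Q \<noteq> {}" by simp
      fix x y assume "x \<in> insert s Q" "y \<in> insert s Q" "x \<noteq> y"
      then show "A x y" using sX Suc(5) sym unfolding X_def by auto
    qed
  qed
  have "card X \<le> card (S \<union> (\<Union>s\<in>S. Xs s))"
    using sub fS fin by (intro card_mono) (auto simp: Xs_def)
  also have "\<dots> \<le> card S + card (\<Union>s\<in>S. Xs s)" by (rule card_Un_le)
  also have "card (\<Union>s\<in>S. Xs s) \<le> (\<Sum>s\<in>S. card (Xs s))" by (rule card_UN_le[OF fS])
  also have "\<dots> \<le> card S * gb a n" using sum_bounded_above[of S "\<lambda>s. card (Xs s)" "gb a n"] IH by simp
  also have "\<dots> \<le> a * gb a n" using cardS by simp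
  finally have "card X \<le> card S + a * gb a n" by simp
  then show ?case using cardS unfolding X_def by simp
qed

lemma fg_sym: "fin_graph V E \<Longrightarrow> E x y \<Longrightarrow> E y x"
  unfolding fin_graph_def by metis

lemma fg_irr: "fin_graph V E \<Longrightarrow> \<not> E x x"
  unfolding fin_graph_def by metis

lemma fg_inV: "fin_graph V E \<Longrightarrow> E x y \<Longrightarrow> x \<in> V \<and> y \<in> V"
  unfolding fin_graph_def by metis

lemma fg_fin: "fin_graph V E \<Longrightarrow> finite V"
  unfolding fin_graph_def by metis

lemma ext_clique:
  assumes g: "fin_graph V E" and K: "is_clique V E K"
  shows "\<exists>K'. max_clique V E K' \<and> K \<subseteq> K'"
proof -
  define P where "P = {K'. is_clique V E K'}"
  have "finite V" using g unfolding fin_graph_def by simp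
  then have fP: "finite P" unfolding P_def is_clique_def
    by (rule finite_subset[rotated, OF finite_Pow_iff[THEN iffD2]]) auto
  obtain m where m: "m \<in> P" "K \<subseteq> m" "\<forall>b\<in>P. m \<subseteq> b \<longrightarrow> m = b"
    using finite_has_maximal2[OF fP, of K] K unfolding P_def by auto
  then show ?thesis unfolding max_clique_def P_def by auto
qed

lemma equiv_ce: "equiv V (clique_equiv V E)"
  unfolding equiv_def refl_on_def sym_def trans_def clique_equiv_def by auto

lemma edge_in_max:
  assumes g: "fin_graph V E" and e: "E u w"
  shows "\<exists>K. max_clique V E K \<and> u \<in> K \<and> w \<in> K"
proof -
  have "is_clique V E {u, w}" using g e unfolding fin_graph_def is_clique_def by auto
  then show ?thesis using ext_clique[OF g] by blast
qed

lemma same_class: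
  assumes "C \<in> clique_classes V E" "u \<in> C" "w \<in> C"
  shows "(u, w) \<in> clique_equiv V E"
proof (rule in_quotient_imp_in_rel[OF equiv_ce])
  show "C \<in> V // clique_equiv V E" using assms(1) unfolding clique_classes_def .
  show "{u, w} \<subseteq> C" using assms(2,3) by simp
qed

lemma class_sub: "C \<in> clique_classes V E \<Longrightarrow> C \<subseteq> V"
  unfolding clique_classes_def by (rule in_quotient_imp_subset[OF equiv_ce])

lemma class_disj:
  assumes "C \<in> clique_classes V E" "D \<in> clique_classes V E" "x \<in> C" "x \<in> D"
  shows "C = D"
proof -
  have "C = D \<or> C \<inter> D = {}"
    using assms(1,2) unfolding clique_classes_def by (rule quotient_disj[OF equiv_ce])
  then show ?thesis using assms(3,4) by blast
qed

lemma class_ne: "C \<in> clique_classes V E \<Longrightarrow> C \<noteq> {}"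
  unfolding clique_classes_def by (rule in_quotient_imp_non_empty[OF equiv_ce])

lemma adj_compat:
  assumes g: "fin_graph V E" and C: "C \<in> clique_classes V E" and D: "D \<in> clique_classes V E"
    and CD: "C \<noteq> D" and u: "u \<in> C" and w: "w \<in> D" and u': "u' \<in> C" and w': "w' \<in> D"
    and e: "E u w"
  shows "E u' w'"
proof -
  obtain K where K: "max_clique V E K" "u \<in> K" "w \<in> K" using edge_in_max[OF g e] by blast
  have "(u, u') \<in> clique_equiv V E" using same_class[OF C u u'] .
  then have "u' \<in> K" using K unfolding clique_equiv_def by blast
  moreover have "(w, w') \<in> clique_equiv V E" using same_class[OF D w w'] .
  then have "w' \<in> K" using K unfolding clique_equiv_def by blast
  moreover have "u' \<noteq> w'" using class_disj[OF C D] u' w' CD by blast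
  ultimately show ?thesis using K unfolding max_clique_def is_clique_def by blast
qed

lemma alpha_le:
  assumes g: "fin_graph V E" and v: "v \<in> V" and S: "S \<subseteq> closed_nbhd V E v" and ind: "indep_set E S"
  shows "card S \<le> alpha_star V E"
proof -
  have fV: "finite V" using g unfolding fin_graph_def by simp
  have fN: "finite (closed_nbhd V E v)" using fV unfolding closed_nbhd_def by simp
  have "{card S | S. S \<subseteq> closed_nbhd V E v \<and> indep_set E S} \<subseteq> card ` Pow (closed_nbhd V E v)"
    by auto
  then have "finite {card S | S. S \<subseteq> closed_nbhd V E v \<and> indep_set E S}"
    using fN by (meson finite_Pow_iff finite_imageI finite_subset)
  then have "card S \<le> alpha_on E (closed_nbhd V E v)"
    unfolding alpha_on_def using S ind by (intro Max_ge) auto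
  also have "\<dots> \<le> alpha_star V E" unfolding alpha_star_def
    using fV v by (intro Max_ge) auto
  finally show ?thesis .
qed

lemma omega_le:
  assumes g: "fin_graph V E" and K: "max_clique V E K"
  shows "card {C \<in> clique_classes V E. C \<inter> K \<noteq> {}} \<le> quot_omega V E"
proof -
  have fV: "finite V" using g unfolding fin_graph_def by simp
  have "{K. max_clique V E K} \<subseteq> Pow V" unfolding max_clique_def is_clique_def by auto
  then have "finite {K. max_clique V E K}" using fV by (meson finite_Pow_iff finite_subset)
  then show ?thesis unfolding quot_omega_def using K by (intro Max_ge) auto
qed

lemma small_alpha_in:
  assumes g: "fin_graph V E" and a: "alpha_star V E \<le> 1" and e: "E u w"
    and K: "max_clique V E K" and uK: "u \<in> K"
  shows "w \<in> K"
proof -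
  note gs = fg_sym[OF g] and irr = fg_irr[OF g] and inV = fg_inV[OF g]
  have uV: "u \<in> V" using inV e by blast
  have Kc: "is_clique V E K" using K unfolding max_clique_def by blast
  have adj: "E x w" if x: "x \<in> K" "x \<noteq> w" for x
  proof (cases "x = u")
    case True thus ?thesis using e by simp
  next
    case False
    then have ux: "u \<noteq> x" by simp
    have kc: "\<forall>a\<in>K. \<forall>b\<in>K. a \<noteq> b \<longrightarrow> E a b" using Kc unfolding is_clique_def by simp
    have exu: "E u x" using kc uK x(1) ux by simp
    show ?thesis
    proof (rule ccontr)
      assume n: "\<not> E x w"
      have "x \<in> closed_nbhd V E u" using exu inV unfolding closed_nbhd_def by blast
      moreover have "w \<in> closed_nbhd V E u" using e inV unfolding closed_nbhd_def by blast
      ultimately have sub: "{x, w} \<subseteq> closed_nbhd V E u" by blast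
      have "\<not> E w x" using n gs[of w x] by blast
      then have "indep_set E {x, w}" using n irr[of x] irr[of w] unfolding indep_set_def by simp
      then have "card {x, w} \<le> alpha_star V E" using alpha_le[OF g uV sub] by blast
      moreover have "card {x, w} = 2" using x(2) by simp
      ultimately show False using a by linarith
    qed
  qed
  have "is_clique V E (insert w K)" unfolding is_clique_def
  proof (intro conjI ballI impI)
    show "insert w K \<subseteq> V" using Kc inV e unfolding is_clique_def by blast
    fix x y assume xy: "x \<in> insert w K" "y \<in> insert w K" "x \<noteq> y"
    then consider "x \<in> K" "y \<in> K" | "x = w" "y \<in> K" | "x \<in> K" "y = w" by blast
    then show "E x y"
    proof cases
      case 1 then show ?thesis using Kc xy(3) unfolding is_clique_def by blast
    next
      case 2 then show ?thesis using adj[of y] gs[of y w] xy(3) by blast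
    next
      case 3 then show ?thesis using adj[of x] xy(3) by blast
    qed
  qed
  then have "insert w K = K" using K unfolding max_clique_def by blast
  then show ?thesis by blast
qed

theorem lemma5p2:
  assumes "fin_graph V E"
  shows "quot_max_degree V E \<le> alpha_star V E ^ quot_omega V E"
proof -
  note g = assms
  note gs = fg_sym[OF g] and irr = fg_irr[OF g] and inV = fg_inV[OF g] and fV = fg_fin[OF g]
  define cl where "cl = clique_classes V E"
  define a where "a = alpha_star V E"
  define k where "k = quot_omega V E"
  have fcl: "finite cl" unfolding cl_def clique_classes_def
    using fV by (rule finite_quotient) (auto simp: clique_equiv_def)
  have each: "card {D \<in> cl. quot_adj E C D} \<le> a ^ k" if C: "C \<in> cl" for C
  proof (cases "a \<le> 1")
    case True
    have "{D \<in> cl. quot_adj E C D} = {}"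
    proof (rule ccontr)
      assume "{D \<in> cl. quot_adj E C D} \<noteq> {}"
      then obtain D u w where D: "D \<in> cl" "C \<noteq> D" "u \<in> C" "w \<in> D" "E u w"
        unfolding quot_adj_def by blast
      have ew: "E w u" using gs[OF D(5)] .
      have uV: "u \<in> V" and wV: "w \<in> V" using inV[OF D(5)] by auto
      have a1: "alpha_star V E \<le> 1" using True unfolding a_def .
      have "\<forall>K. max_clique V E K \<longrightarrow> (u \<in> K \<longleftrightarrow> w \<in> K)"
        using small_alpha_in[OF g a1 D(5)] small_alpha_in[OF g a1 ew] by blast
      then have "(u, w) \<in> clique_equiv V E"
        using uV wV unfolding clique_equiv_def by auto
      moreover obtain x where "x \<in> V" "C = clique_equiv V E `` {x}"
        using C unfolding cl_def clique_classes_def by (auto elim: quotientE)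
      ultimately have "w \<in> C" using D(3) equiv_ce[of V E]
        unfolding equiv_def trans_def by blast
      then show False using class_disj[of C V E D w] C D unfolding cl_def by blast
    qed
    then show ?thesis by (metis card.empty zero_le)
  next
    case False
    define r where "r D = (SOME x. x \<in> D)" for D :: "'a set"
    have rD: "r D \<in> D" if "D \<in> cl" for D
      using class_ne[of D V E] that unfolding r_def cl_def by (auto intro: someI_ex)
    have rE: "E (r C') (r D)" if "C' \<in> cl" "D \<in> cl" "quot_adj E C' D" for C' D
      using that adj_compat[OF g, of C' D] rD unfolding quot_adj_def cl_def by blast
    have H1: "card Q \<le> k" if Q: "Q \<subseteq> cl" "\<And>x y. x\<in>Q \<Longrightarrow> y\<in>Q \<Longrightarrow> x\<noteq>y \<Longrightarrow> quot_adj E x y" for Q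
    proof -
      have "is_clique V E (r ` Q)" unfolding is_clique_def
      proof
        show "r ` Q \<subseteq> V" using Q rD class_sub unfolding cl_def by blast
        show "\<forall>x\<in>r ` Q. \<forall>y\<in>r ` Q. x \<noteq> y \<longrightarrow> E x y" using Q rE by blast
      qed
      then obtain K where K: "max_clique V E K" "r ` Q \<subseteq> K" using ext_clique[OF g] by blast
      have "Q \<subseteq> {C \<in> cl. C \<inter> K \<noteq> {}}" using K rD Q by blast
      then have "card Q \<le> card {C \<in> cl. C \<inter> K \<noteq> {}}" using fcl by (intro card_mono) auto
      also have "\<dots> \<le> k" using omega_le[OF g K(1)] unfolding cl_def k_def .
      finally show ?thesis .
    qed
    have H2: "card S \<le> a" if "c \<in> cl" "S \<subseteq> cl" "\<And>s. s\<in>S \<Longrightarrow> quot_adj E c s"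
      "\<And>x y. x\<in>S \<Longrightarrow> y\<in>S \<Longrightarrow> \<not> quot_adj E x y" for c S
    proof -
      have inj: "inj_on r S"
      proof (rule inj_onI)
        fix x y assume xy: "x \<in> S" "y \<in> S" "r x = r y"
        then have "x \<in> cl" "y \<in> cl" using that(2) by auto
        have "r x \<in> x" using rD \<open>x \<in> cl\<close> by blast
        moreover have "r x \<in> y" using rD[OF \<open>y \<in> cl\<close>] xy(3) by simp
        ultimately show "x = y" using class_disj[of x V E y "r x"] \<open>x \<in> cl\<close> \<open>y \<in> cl\<close>
          unfolding cl_def by blast
      qed
      have "r ` S \<subseteq> closed_nbhd V E (r c)"
        using that rE inV unfolding closed_nbhd_def by blast
      moreover have "indep_set E (r ` S)" unfolding indep_set_def
      proof (intro ballI)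
        fix x y assume "x \<in> r ` S" "y \<in> r ` S"
        then obtain s t where st: "s \<in> S" "t \<in> S" "x = r s" "y = r t" by blast
        show "\<not> E x y"
        proof (cases "s = t")
          case True thus ?thesis using st irr by simp
        next
          case False
          then show ?thesis using that(2,4) st rD unfolding quot_adj_def by blast
        qed
      qed
      moreover have "r c \<in> V" using rD that(1) class_sub unfolding cl_def by blast
      ultimately have "card (r ` S) \<le> a" using alpha_le[OF g] unfolding a_def by blast
      then show ?thesis using card_image[OF inj] by simp
    qed
    have "card {D \<in> cl. \<forall>q\<in>{C}. quot_adj E q D} \<le> gb a (k - 1)"
    proof (rule abstract_bound[where U = cl and A = "quot_adj E" and k = k and a = a])
      show "finite cl" by (rule fcl)
      show "\<And>x. \<not> quot_adj E x x" unfolding quot_adj_def by simp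
      show "quot_adj E y x" if qa: "quot_adj E x y" for x y
      proof -
        obtain u v where "x \<noteq> y" "u \<in> x" "v \<in> y" "E u v" using qa unfolding quot_adj_def by blast
        moreover have "E v u" using gs[OF \<open>E u v\<close>] .
        ultimately show ?thesis unfolding quot_adj_def by blast
      qed
    qed (use H1 H2 C in auto)
    also have "\<dots> \<le> a ^ k"
    proof (cases k)
      case 0 thus ?thesis by simp
    next
      case (Suc m)
      then show ?thesis using gb_bound[of a m] False by simp
    qed
    finally show ?thesis by simp
  qed
  show ?thesis
    unfolding quot_max_degree_def
    using fcl each unfolding cl_def a_def k_def by (subst Max_le_iff) auto
qed

end
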